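(* Let $a\ge 2$ be an even integer. For every integer $n\ge 1$, the generalized Fermat number $F_n^{(a)}=a^{2^{n-1}}+1$ is primover to base $a$.
   Context: For an integer $a>1$ and an odd integer $n>1$ with $\gcd(a,n)=1$: $h_a(n)$ denotes the multiplicative order of $a$ modulo $n$. A cyclotomic coset of $a$ modulo $n$ is a set of the form $\{\, s a^j \bmod n : j\ge 0\,\}$ with $s\in\{1,\dots,n-1\}$; these cosets partition $\{1,\dots,n-1\}$, and $r_a(n)$ denotes the number of distinct cyclotomic cosets of $a$ modulo $n$. An odd composite number $n$ coprime to $a$ is called an overpseudoprime to base $a$ if $n=r_a(n)\,h_a(n)+1$. An integer $N>1$ is called primover to base $a$ if it is either prime or an overpseudoprime to base $a$. *)

theory Defs
  imports "HOL-Number_Theory.Number_Theory"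
begin

definition h_ord :: "nat \<Rightarrow> nat \<Rightarrow> nat" where
  "h_ord a n = ord n a"

definition cyc_coset :: "nat \<Rightarrow> nat \<Rightarrow> nat \<Rightarrow> nat set" where
  "cyc_coset a n s = {(s * a ^ j) mod n | j. True}"

definition r_num :: "nat \<Rightarrow> nat \<Rightarrow> nat" where
  "r_num a n = card (cyc_coset a n ` {1..n-1})"

definition overpseudoprime :: "nat \<Rightarrow> nat \<Rightarrow> bool" where
  "overpseudoprime a n \<longleftrightarrow> odd n \<and> n > 1 \<and> \<not> prime n \<and> coprime a n
      \<and> n = r_num a n * h_ord a n + 1"

definition primover :: "nat \<Rightarrow> nat \<Rightarrow> bool" where
  "primover a N \<longleftrightarrow> N > 1 \<and> (prime N \<or> overpseudoprime a N)"

end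

theory Submission
  imports Defs
begin

lemma ord_fermat:
  fixes a M k :: nat
  assumes M1: "M > 1" and Modd: "odd M" and dv: "M dvd a ^ (2^k) + 1"
  shows "ord M a = 2 ^ Suc k"
proof -
  let ?m = "(2::nat)^k"
  have ci: "[int a ^ ?m = -1] (mod int M)"
  proof -
    have "int M dvd int a ^ ?m + 1" using dv
      by (metis of_nat_1 of_nat_add of_nat_dvd_iff of_nat_power)
    thus ?thesis by (simp add: cong_iff_dvd_diff)
  qed
  have X: "[(int a ^ ?m)^2 = (-1)^2] (mod int M)" using ci by (rule cong_pow)
  have e: "(2::nat)^Suc k = ?m * 2" by simp
  have Y: "int a ^ (2^Suc k) = (int a ^ ?m)^2" by (simp only: e power_mult)
  have Z: "((-1)::int)^2 = 1" by simp
  have "[int a ^ (2^Suc k) = 1] (mod int M)" using X unfolding Y[symmetric] Z .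
  hence "[int (a ^ (2^Suc k)) = int 1] (mod int M)" by (simp only: of_nat_power of_nat_1)
  hence c1: "[a ^ (2^Suc k) = 1] (mod M)" by (simp only: cong_int_iff)
  have "ord M a dvd 2 ^ Suc k" by (rule ord_divides[THEN iffD1, OF c1])
  then obtain i where i: "i \<le> Suc k" "ord M a = 2 ^ i"
    using divides_primepow_nat[OF two_is_prime_nat] by blast
  show ?thesis
  proof (rule ccontr)
    assume "ord M a \<noteq> 2 ^ Suc k"
    with i have "i \<le> k" by (cases "i = Suc k") auto
    hence "ord M a dvd ?m" using i by (simp add: le_imp_power_dvd)
    hence "[a ^ ?m = 1] (mod M)" by (rule ord_divides[THEN iffD2])
    hence "[int (a ^ ?m) = int 1] (mod int M)" by (simp only: cong_int_iff)
    hence "[int a ^ ?m = 1] (mod int M)" by (simp only: of_nat_power of_nat_1)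
    hence c2: "[-1 = (1::int)] (mod int M)" by (rule cong_trans[OF cong_sym[OF ci]])
    hence "int M dvd - 1 - 1" by (simp only: cong_iff_dvd_diff)
    hence "int M dvd int 2" by (simp add: dvd_neg_div)
    hence "M dvd 2" by (simp only: int_dvd_int_iff)
    hence "M \<le> 2" by (rule dvd_imp_le) simp
    hence "M = 2" using M1 by linarith
    with Modd show False by simp
  qed
qed


context
  fixes a m N :: nat
  assumes a2: "a \<ge> 2" and ev: "even a" and mpos: "m > 0"
    and ordM: "\<And>M. M > 1 \<Longrightarrow> M dvd N \<Longrightarrow> ord M a = 2 * m"
    and Ndef: "N = a ^ m + 1"
begin

lemma N1: "N > 2"
proof -
  have "a \<le> a ^ m" using mpos a2 by (simp add: self_le_power)
  thus ?thesis using a2 Ndef by linarith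
qed

lemma cop: "coprime a N"
proof -
  have "coprime (a ^ m) N" by (simp add: Ndef)
  thus ?thesis using coprime_power_left_iff[of a m N] mpos by simp
qed

lemma aN: "[a ^ (2*m) = 1] (mod N)"
  using ordM[of N] N1 ord_divides[of a "2*m" N] by simp

lemma red: "[s * a ^ j = s * a ^ (j mod (2*m))] (mod N)"
proof -
  have "a ^ j = a ^ ((2*m) * (j div (2*m)) + j mod (2*m))"
    by (simp only: mult_div_mod_eq)
  also have "\<dots> = (a ^ (2*m)) ^ (j div (2*m)) * a ^ (j mod (2*m))"
    by (simp only: power_add power_mult)
  finally have ej: "a ^ j = (a ^ (2*m)) ^ (j div (2*m)) * a ^ (j mod (2*m))" .
  have "[(a ^ (2*m)) ^ (j div (2*m)) = 1 ^ (j div (2*m))] (mod N)"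
    by (rule cong_pow[OF aN])
  hence c0: "[(a ^ (2*m)) ^ (j div (2*m)) = 1] (mod N)" by (simp only: power_one)
  have c: "[(a ^ (2*m)) ^ (j div (2*m)) * a ^ (j mod (2*m)) = 1 * a ^ (j mod (2*m))] (mod N)"
    by (rule cong_mult[OF c0 cong_refl])
  have "[s * ((a ^ (2*m)) ^ (j div (2*m)) * a ^ (j mod (2*m))) = s * (1 * a ^ (j mod (2*m)))] (mod N)"
    by (rule cong_mult[OF cong_refl c])
  thus ?thesis by (simp only: ej mult_1)
qed

lemma sub: "s \<in> {1..N-1} \<Longrightarrow> cyc_coset a N s \<subseteq> {1..N-1}"
proof
  fix x assume s: "s \<in> {1..N-1}" and "x \<in> cyc_coset a N s"
  then obtain j where x: "x = s * a ^ j mod N" by (auto simp: cyc_coset_def)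
  have "coprime N (a ^ j)" using cop by (simp add: coprime_commute)
  moreover have "\<not> N dvd s" using s N1 by (auto dest: dvd_imp_le)
  ultimately have "\<not> N dvd s * a ^ j"
    using coprime_dvd_mult_left_iff by blast
  hence "x \<noteq> 0" using x by (simp add: dvd_eq_mod_eq_0)
  moreover have "x < N" using x N1 by simp
  ultimately show "x \<in> {1..N-1}" by auto
qed

lemma coset_self: "s \<in> {1..N-1} \<Longrightarrow> s \<in> cyc_coset a N s"
proof -
  assume "s \<in> {1..N-1}"
  hence "s = s * a ^ 0 mod N" using N1 by auto
  thus ?thesis unfolding cyc_coset_def by blast
qed

lemma trans': "x \<in> cyc_coset a N s \<Longrightarrow> cyc_coset a N x \<subseteq> cyc_coset a N s"
proof
  fix y assume xs: "x \<in> cyc_coset a N s" and "y \<in> cyc_coset a N x"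
  then obtain j where y: "y = x * a ^ j mod N" by (auto simp: cyc_coset_def)
  obtain i where x: "x = s * a ^ i mod N" using xs by (auto simp: cyc_coset_def)
  have "y = s * a ^ (i + j) mod N" using x y
    by (simp add: mod_mult_left_eq power_add mult.assoc)
  thus "y \<in> cyc_coset a N s" unfolding cyc_coset_def by blast
qed

lemma coset_back: "x \<in> cyc_coset a N s \<Longrightarrow> s \<in> {1..N-1} \<Longrightarrow> s \<in> cyc_coset a N x"
proof -
  assume xs: "x \<in> cyc_coset a N s" and s: "s \<in> {1..N-1}"
  obtain i where x: "x = s * a ^ i mod N" using xs by (auto simp: cyc_coset_def)
  have "x * a ^ (i * (2*m - 1)) mod N = s * a ^ (i + i * (2*m - 1)) mod N"
    using x by (simp add: mod_mult_left_eq power_add mult.assoc)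
  also have "i + i * (2*m - 1) = (2*m) * i" using mpos
    by (simp add: algebra_simps)
  also have "s * a ^ ((2*m) * i) mod N = s mod N"
    using red[of s "(2*m)*i"] by (simp add: cong_def)
  also have "s mod N = s" using s by auto
  finally have "s = x * a ^ (i * (2*m - 1)) mod N" by simp
  thus ?thesis unfolding cyc_coset_def by blast
qed

lemma coset_eq: "x \<in> cyc_coset a N s \<Longrightarrow> s \<in> {1..N-1} \<Longrightarrow> cyc_coset a N x = cyc_coset a N s"
  using trans' coset_back by blast

lemma inj_aux:
  assumes s: "s \<in> {1..N-1}" and ij: "i < j" "j < 2*m"
    and eq: "s * a ^ i mod N = s * a ^ j mod N"
  shows False
proof -
  define e where "e = j - i"
  have e: "0 < e" "e < 2*m" using ij by (auto simp: e_def)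
  have "j = e + i" using ij by (simp add: e_def)
  hence "a ^ j = a ^ e * a ^ i" by (simp only: power_add)
  hence "[s * a ^ e * a ^ i = s * a ^ i] (mod N)" using eq
    by (simp add: cong_def mult.assoc)
  moreover have "coprime (a ^ i) N" using cop by simp
  ultimately have c: "[s * a ^ e = s] (mod N)" using cong_mult_rcancel_nat by blast
  have apos: "a ^ e \<ge> 1" using a2 by simp
  hence "s * a ^ e \<ge> s" by simp
  hence "N dvd s * a ^ e - s" using c cong_altdef_nat by blast
  hence dv: "N dvd s * (a ^ e - 1)" by (simp add: right_diff_distrib')
  define d where "d = gcd s N"
  define M where "M = N div d"
  define s' where "s' = s div d"
  have dpos: "d > 0" using s by (simp add: d_def)
  have Nd: "N = d * M" by (simp add: M_def d_def)
  have sd: "s = d * s'" by (simp add: s'_def d_def)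
  have "d \<le> s" using s by (simp add: d_def gcd_le1_nat)
  hence "d < N" using s by auto
  have M1: "M > 1"
  proof (rule ccontr)
    assume "\<not> M > 1"
    hence "d * M \<le> d * 1" by (intro mult_le_mono2) simp
    thus False using Nd \<open>d < N\<close> by linarith
  qed
  have MN: "M dvd N" using Nd by simp
  have "d * M dvd d * (s' * (a ^ e - 1))" using dv Nd sd by (simp add: mult.assoc)
  hence "M dvd s' * (a ^ e - 1)" using dpos by simp
  moreover have "coprime M s'"
    using div_gcd_coprime[of s N] s by (simp add: M_def s'_def d_def coprime_commute)
  ultimately have "M dvd a ^ e - 1" using coprime_dvd_mult_right_iff by blast
  hence "[a ^ e = 1] (mod M)" using cong_altdef_nat[OF apos] by blast
  hence "ord M a dvd e" by (rule ord_divides[THEN iffD1])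
  hence "2*m dvd e" using ordM[OF M1 MN] by simp
  with e show False using dvd_imp_le by fastforce
qed

lemma card_coset: "s \<in> {1..N-1} \<Longrightarrow> card (cyc_coset a N s) = 2*m"
proof -
  assume s: "s \<in> {1..N-1}"
  let ?f = "\<lambda>j. s * a ^ j mod N"
  have img: "cyc_coset a N s = ?f ` {..<2*m}"
  proof
    show "cyc_coset a N s \<subseteq> ?f ` {..<2*m}"
    proof
      fix x assume "x \<in> cyc_coset a N s"
      then obtain j where x: "x = s * a ^ j mod N" by (auto simp: cyc_coset_def)
      hence "x = ?f (j mod (2*m))" using red[of s j] by (simp add: cong_def)
      moreover have "j mod (2*m) < 2*m" using mpos by simp
      ultimately show "x \<in> ?f ` {..<2*m}" by blast
    qed
    show "?f ` {..<2*m} \<subseteq> cyc_coset a N s" unfolding cyc_coset_def by blast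
  qed
  have "inj_on ?f {..<2*m}"
  proof (rule inj_onI)
    fix i j assume i: "i \<in> {..<2*m}" and j: "j \<in> {..<2*m}" and eq: "?f i = ?f j"
    show "i = j"
    proof (rule ccontr)
      assume "i \<noteq> j"
      hence "i < j \<or> j < i" by auto
      thus False
      proof
        assume "i < j" thus False using inj_aux[OF s _ _ eq] j by auto
      next
        assume "j < i" thus False using inj_aux[OF s _ _ eq[symmetric]] i by auto
      qed
    qed
  qed
  thus ?thesis using img card_image by fastforce
qed

lemma count: "r_num a N * (2*m) + 1 = N"
proof -
  let ?S = "cyc_coset a N ` {1..N-1}"
  have U: "\<Union>?S = {1..N-1}" using sub coset_self by blast
  have disj: "\<forall>c1\<in>?S. \<forall>c2\<in>?S. c1 \<noteq> c2 \<longrightarrow> c1 \<inter> c2 = {}"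
  proof (intro ballI impI)
    fix c1 c2 assume c1: "c1 \<in> ?S" and c2: "c2 \<in> ?S" and ne: "c1 \<noteq> c2"
    obtain s where s: "s \<in> {1..N-1}" "c1 = cyc_coset a N s" using c1 by blast
    obtain t where t: "t \<in> {1..N-1}" "c2 = cyc_coset a N t" using c2 by blast
    show "c1 \<inter> c2 = {}"
    proof (rule ccontr)
      assume "c1 \<inter> c2 \<noteq> {}"
      then obtain x where "x \<in> c1" "x \<in> c2" by blast
      hence "cyc_coset a N x = c1" "cyc_coset a N x = c2"
        using coset_eq[of x s] coset_eq[of x t] s t by simp_all
      thus False using ne by simp
    qed
  qed
  have "(2*m) * card ?S = card (\<Union>?S)"
  proof (rule card_partition)
    show "finite ?S" by simp
    show "finite (\<Union>?S)" using U by simp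
    show "\<And>c. c \<in> ?S \<Longrightarrow> card c = 2*m" using card_coset by blast
    show "\<And>c1 c2. c1 \<in> ?S \<Longrightarrow> c2 \<in> ?S \<Longrightarrow> c1 \<noteq> c2 \<Longrightarrow> c1 \<inter> c2 = {}"
      using disj by blast
  qed
  also have "\<dots> = N - 1" using U by simp
  finally show ?thesis using N1 by (simp add: r_num_def mult.commute)
qed

end

theorem theorem5:
  fixes a n :: nat
  assumes "a \<ge> 2" and "even a" and "n \<ge> 1"
  shows "primover a (a ^ (2 ^ (n - 1)) + 1)"
proof -
  define k where "k = n - 1"
  define m where "m = (2::nat) ^ k"
  define N where "N = a ^ m + 1"
  have mpos: "m > 0" by (simp add: m_def)
  have Nodd: "odd N" using assms(2) mpos N_def by simp
  have ordM: "ord M a = 2 * m" if "M > 1" "M dvd N" for M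
  proof -
    have "odd M" using that(2) Nodd dvd_trans[of 2 M N] by blast
    hence "ord M a = 2 ^ Suc k" using ord_fermat that N_def m_def by blast
    thus ?thesis by (simp add: m_def)
  qed
  note ctx = assms(1) assms(2) mpos ordM N_def
  have N1: "N > 2" using N1[OF ctx] .
  have cop: "coprime a N" using cop[OF ctx] .
  have cnt: "r_num a N * (2*m) + 1 = N" using count[OF ctx] .
  have h: "h_ord a N = 2 * m" using ordM[of N] N1 by (simp add: h_ord_def)
  have "primover a N"
    unfolding primover_def overpseudoprime_def using N1 Nodd cop cnt h by auto
  thus ?thesis by (simp add: N_def m_def k_def)
qed

end
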